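(* Let $\mathcal{P}$ be a fixed hyper-prior, $\delta>0$ and $\lambda>0$ fixed. Then with probability at least $1-\delta$ over the sampling of $S_1,\dots,S_n$, simultaneously for all hyper-posteriors $\mathcal{Q}$ and all posteriors $Q_1,\dots,Q_n$, $$-\frac M\lambda\log\Big(1-\mathcal{R}^S+\mathcal{R}^S e^{-\lambda/M}\Big)\;\le\;\widehat{\mathcal{R}}^S+\frac{\mathrm{KL}(\mathfrak{Q}\|\mathfrak{P})+\log\frac1\delta}{\lambda},$$ where $M=\sum_{i=1}^n m_i$, $\mathcal{R}^S=\sum_{i=1}^n\frac{m_i}{M}\mathcal{R}_i(Q_i)$ and $\widehat{\mathcal{R}}^S=\sum_{i=1}^n\frac{m_i}{M}\widehat{\mathcal{R}}_i(Q_i)$.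
   Context: Multi-task setting: $n$ tasks; task $i$ has an unknown distribution $D_i$ on $\mathcal{Z}$, a loss $\ell_i:\mathcal{F}\times\mathcal{Z}\to[0,1]$, and a training set $S_i=(z_{i1},\dots,z_{im_i})$ of $m_i\ge1$ i.i.d. samples from $D_i$, the $S_i$ mutually independent. $\mathcal{M}(\mathcal{F})$ is the set of probability distributions on $\mathcal{F}$. For $Q\in\mathcal{M}(\mathcal{F})$: $\ell_i(Q,z)=\mathbb{E}_{f\sim Q}\ell_i(f,z)$, $\mathcal{R}_i(Q)=\mathbb{E}_{z\sim D_i}\ell_i(Q,z)$, $\widehat{\mathcal{R}}_i(Q)=\frac1{m_i}\sum_{j=1}^{m_i}\ell_i(Q,z_{ij})$. Hyper-prior $\mathcal{P}$ (data-independent) and hyper-posterior $\mathcal{Q}$ are distributions on $\mathcal{M}(\mathcal{F})$; posteriors $Q_i\in\mathcal{M}(\mathcal{F})$; $\mathcal{Q},Q_i$ may depend on the data. $\mathfrak{Q}=\mathcal{Q}\times Q_1\times\cdots\times Q_n$ on $\mathcal{M}(\mathcal{F})\times\mathcal{F}^n$; $\mathfrak{P}$ on the same space is generated by $P\sim\mathcal{P}$, then $f_1,\dots,f_n$ i.i.d. $\sim P$. $\mathrm{KL}$ is the Kullback–Leibler divergence. *)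

theory Defs
  imports "HOL-Probability.Probability"
begin

text \<open>It is the library's KL_divergence when Q is absolutely
  continuous w.r.t. P and the log-density is Q-integrable, and +infinity otherwise
  (the negative part of the log-density is always Q-integrable, so in the latter
  case the true KL divergence is +infinity).\<close>
definition KL_div :: "'a measure \<Rightarrow> 'a measure \<Rightarrow> ereal" where
  "KL_div Q P =
     (if sets Q = sets P \<and> absolutely_continuous P Q \<and>
         integrable Q (entropy_density (exp 1) P Q)
      then ereal (KL_divergence (exp 1) P Q) else \<infinity>)"

definition rloss :: "('f \<Rightarrow> 'z \<Rightarrow> real) \<Rightarrow> 'f measure \<Rightarrow> 'z \<Rightarrow> real" where
  "rloss l Q z = (\<integral>f. l f z \<partial>Q)"

definition risk :: "('f \<Rightarrow> 'z \<Rightarrow> real) \<Rightarrow> 'z measure \<Rightarrow> 'f measure \<Rightarrow> real" where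
  "risk l D Q = (\<integral>z. rloss l Q z \<partial>D)"

definition emp_risk :: "('f \<Rightarrow> 'z \<Rightarrow> real) \<Rightarrow> nat \<Rightarrow> (nat \<Rightarrow> 'z) \<Rightarrow> 'f measure \<Rightarrow> real" where
  "emp_risk l m s Q = (1 / real m) * (\<Sum>j<m. rloss l Q (s j))"

definition prior_joint :: "'f measure \<Rightarrow> 'f measure measure \<Rightarrow> nat \<Rightarrow> ('f measure \<times> (nat \<Rightarrow> 'f)) measure" where
  "prior_joint MF HP n =
     HP \<bind> (\<lambda>P. distr (PiM {..<n} (\<lambda>_. P))
                      (prob_algebra MF \<Otimes>\<^sub>M PiM {..<n} (\<lambda>_. MF)) (\<lambda>fs. (P, fs)))"

definition post_joint :: "'f measure measure \<Rightarrow> nat \<Rightarrow> (nat \<Rightarrow> 'f measure) \<Rightarrow> ('f measure \<times> (nat \<Rightarrow> 'f)) measure" where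
  "post_joint HQ n Q = HQ \<Otimes>\<^sub>M PiM {..<n} Q"

definition sample_measure :: "nat \<Rightarrow> (nat \<Rightarrow> nat) \<Rightarrow> (nat \<Rightarrow> 'z measure) \<Rightarrow> (nat \<Rightarrow> nat \<Rightarrow> 'z) measure" where
  "sample_measure n m D = PiM {..<n} (\<lambda>i. PiM {..<m i} (\<lambda>_. D i))"

end

theory Submission
  imports Defs
begin



lemma DV:
  fixes Nm Pm :: "'a measure" and G :: "'a \<Rightarrow> real"
  assumes fin: "finite_measure Nm" and pr: "prob_space Pm"
    and sets_eq: "sets Pm = sets Nm" and ac: "absolutely_continuous Nm Pm"
    and int: "integrable Pm (entropy_density (exp 1) Nm Pm)"
    and Gm[measurable]: "G \<in> borel_measurable Nm" and Gb: "\<And>x. \<bar>G x\<bar> \<le> B"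
  shows "(\<integral>x. G x \<partial>Pm) \<le> KL_divergence (exp 1) Nm Pm + ln (\<integral>x. exp (G x) \<partial>Nm)"
    and "0 < (\<integral>x. exp (G x) \<partial>Nm)"
proof -
  interpret N: finite_measure Nm by fact
  interpret P: prob_space Pm by fact
  have "finite_measure Pm" by unfold_locales
  from N.real_RN_deriv[OF this ac sets_eq] obtain D
    where D[measurable]: "D \<in> borel_measurable Nm"
      and D2: "AE x in Nm. RN_deriv Nm Pm x = ennreal (D x)"
      and D3: "AE x in Pm. 0 < D x" and D4: "\<And>x. 0 \<le> D x"
    by this auto
  have "Pm = density Nm (RN_deriv Nm Pm)"
    using ac sets_eq by (rule N.density_RN_deriv[symmetric])
  also have "\<dots> = density Nm D"
    using D2 by (auto intro!: density_cong)
  finally have PD: "Pm = density Nm D" .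
  have D2': "AE x in Pm. RN_deriv Nm Pm x = ennreal (D x)"
    by (rule absolutely_continuous_AE[OF sets_eq ac D2])
  have Gm'[measurable]: "G \<in> borel_measurable Pm" using Gm unfolding measurable_cong_sets[OF sets_eq refl] .
  have Dm'[measurable]: "D \<in> borel_measurable Pm" using D unfolding measurable_cong_sets[OF sets_eq refl] .
  have Gle: "G x \<le> B" for x using Gb[of x] abs_ge_self[of "G x"] by linarith
  have Gge: "- B \<le> G x" for x using Gb[of x] abs_ge_minus_self[of "G x"] by linarith
  define Z where "Z = (\<integral>x. exp (G x) \<partial>Nm)"
  have intN: "integrable Nm (\<lambda>x. exp (G x))"
    apply (rule N.integrable_const_bound[where B="exp B"])
     apply (intro AE_I2) apply (simp add: Gle)
    by measurable
  have "emeasure Nm (space Nm) \<noteq> 0"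
  proof
    assume a: "emeasure Nm (space Nm) = 0"
    have "emeasure Pm (space Nm) = 0" by (rule absolutely_continuousD[OF ac sets.top[of Nm] a])
    then show False using P.emeasure_space_1 sets_eq_imp_space_eq[OF sets_eq] by simp
  qed
  then have mpos: "0 < measure Nm (space Nm)"
    using N.emeasure_eq_measure by (simp add: zero_less_measure_iff)
  have "exp (- B) * measure Nm (space Nm) = (\<integral>x. exp (- B) \<partial>Nm)" by simp
  also have "\<dots> \<le> Z" unfolding Z_def
    by (intro integral_mono intN) (simp_all add: Gge)
  moreover have "0 < exp (- B) * measure Nm (space Nm)" using mpos by simp
  ultimately have Zpos: "0 < Z" by linarith
  then show "0 < (\<integral>x. exp (G x) \<partial>Nm)" by (simp add: Z_def)
  have entm[measurable]: "entropy_density (exp 1) Nm Pm \<in> borel_measurable Pm" using measurable_entropy_density unfolding measurable_cong_sets[OF sets_eq refl] .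
  have ent: "AE x in Pm. entropy_density (exp 1) Nm Pm x = ln (D x)"
    using D2' by eventually_elim (simp add: entropy_density_def log_ln D4)
  have intlnD: "integrable Pm (\<lambda>x. ln (D x))"
    by (rule integrable_cong_AE_imp[OF int _ ent]) measurable
  have KL: "KL_divergence (exp 1) Nm Pm = (\<integral>x. ln (D x) \<partial>Pm)"
    unfolding KL_divergence_def using ent entm by (intro integral_cong_AE) auto
  have intP: "integrable Pm (\<lambda>x. G x)"
    apply (rule P.integrable_const_bound[where B=B])
     apply (intro AE_I2) apply (simp add: Gb)
    by measurable
  have eqD: "\<And>x. D x * (exp (G x) / D x) = (if D x = 0 then 0 else exp (G x))" by auto
  have int2N: "integrable Nm (\<lambda>x. D x * (exp (G x) / D x))"
    apply (rule N.integrable_const_bound[where B="exp B"])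
     apply (intro AE_I2) apply (simp add: eqD Gle)
    by measurable
  have int2: "integrable Pm (\<lambda>x. exp (G x) / D x)"
    unfolding PD using int2N D4 by (subst integrable_density) auto
  have I2: "(\<integral>x. exp (G x) / D x \<partial>Pm) \<le> Z"
  proof -
    have "(\<integral>x. exp (G x) / D x \<partial>Pm) = (\<integral>x. D x * (exp (G x) / D x) \<partial>Nm)"
      unfolding PD using D4 by (subst integral_density) auto
    also have "\<dots> \<le> Z" unfolding Z_def
      by (intro integral_mono int2N intN) (auto simp: eqD)
    finally show ?thesis .
  qed
  have pw: "AE x in Pm. G x - ln (D x) \<le> ln Z + exp (G x) / D x / Z - 1"
    using D3
  proof eventually_elim
    case (elim x)
    define y where "y = exp (G x) / D x / Z"
    have ypos: "0 < y" using elim Zpos by (simp add: y_def)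
    have "ln y = G x - ln (D x) - ln Z" using elim Zpos
      by (simp add: y_def ln_div ln_mult)
    moreover have "ln y \<le> y - 1" using ypos by (rule ln_le_minus_one)
    ultimately show ?case by (simp add: y_def)
  qed
  have i1: "integrable Pm (\<lambda>x. G x - ln (D x))" by (rule Bochner_Integration.integrable_diff[OF intP intlnD])
  have i2: "integrable Pm (\<lambda>x. ln Z + exp (G x) / D x / Z - 1)"
    by (rule Bochner_Integration.integrable_diff[OF Bochner_Integration.integrable_add[OF P.integrable_const integrable_divide_zero[OF int2]] P.integrable_const])
  have "(\<integral>x. G x - ln (D x) \<partial>Pm) \<le> (\<integral>x. ln Z + exp (G x) / D x / Z - 1 \<partial>Pm)"
    by (rule integral_mono_AE[OF i1 i2 pw])
  also have "\<dots> = ln Z + (\<integral>x. exp (G x) / D x \<partial>Pm) / Z - 1"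
  proof -
    have a: "integrable Pm (\<lambda>x. ln Z + exp (G x) / D x / Z)"
      by (rule Bochner_Integration.integrable_add[OF P.integrable_const integrable_divide_zero[OF int2]])
    have "(\<integral>x. ln Z + exp (G x) / D x / Z - 1 \<partial>Pm) = (\<integral>x. ln Z + exp (G x) / D x / Z \<partial>Pm) - (\<integral>x. 1 \<partial>Pm)"
      by (rule Bochner_Integration.integral_diff[OF a P.integrable_const])
    also have "(\<integral>x. ln Z + exp (G x) / D x / Z \<partial>Pm) = (\<integral>x. ln Z \<partial>Pm) + (\<integral>x. exp (G x) / D x / Z \<partial>Pm)"
      by (rule Bochner_Integration.integral_add[OF P.integrable_const integrable_divide_zero[OF int2]])
    also have "(\<integral>x. exp (G x) / D x / Z \<partial>Pm) = (\<integral>x. exp (G x) / D x \<partial>Pm) / Z"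
      by (rule integral_divide_zero)
    finally show ?thesis by (simp add: P.prob_space)
  qed
  also have "\<dots> \<le> ln Z" using I2 Zpos by (simp add: field_simps)
  finally show "(\<integral>x. G x \<partial>Pm) \<le> KL_divergence (exp 1) Nm Pm + ln (\<integral>x. exp (G x) \<partial>Nm)"
    using intP intlnD KL by (simp add: Z_def)
qed



lemma exp_chord:
  fixes t x :: real assumes "0 \<le> x" "x \<le> 1"
  shows "exp (- t * x) \<le> 1 - x + x * exp (- t)"
proof -
  have "exp ((1 - x) *\<^sub>R 0 + x *\<^sub>R (- t)) \<le> (1 - x) * exp 0 + x * exp (- t)"
    by (rule convex_onD[OF exp_convex]) (use assms in auto)
  then show ?thesis by (simp add: mult.commute)
qed

lemma mgf_single:
  fixes D :: "'z measure" and h :: "'z \<Rightarrow> real" and t :: real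
  assumes D: "prob_space D" and hm[measurable]: "h \<in> borel_measurable D"
    and hb: "\<And>z. 0 \<le> h z \<and> h z \<le> 1"
  shows "(\<integral>\<^sup>+z. ennreal (exp (- t * h z)) \<partial>D) \<le> ennreal (1 - (\<integral>z. h z \<partial>D) + (\<integral>z. h z \<partial>D) * exp (- t))"
proof -
  interpret prob_space D by fact
  have ih: "integrable D h"
    apply (rule integrable_const_bound[where B=1])
     apply (intro AE_I2) using hb apply simp
    by measurable
  have tb: "- t * h z \<le> \<bar>t\<bar>" for z
    using hb[of z] by (smt (verit, best) mult_nonpos_nonneg mult_right_le_one_le)
  have ie: "integrable D (\<lambda>z. exp (- t * h z))"
    apply (rule integrable_const_bound[where B="exp \<bar>t\<bar>"])
     apply (intro AE_I2) using tb apply simp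
    by measurable
  have "(\<integral>\<^sup>+z. ennreal (exp (- t * h z)) \<partial>D) = ennreal (\<integral>z. exp (- t * h z) \<partial>D)"
    by (rule nn_integral_eq_integral[OF ie]) simp
  also have "(\<integral>z. exp (- t * h z) \<partial>D) \<le> (\<integral>z. 1 - h z + h z * exp (- t) \<partial>D)"
    by (rule integral_mono[OF ie]) (use ih hb exp_chord in auto)
  also have "\<dots> = 1 - (\<integral>z. h z \<partial>D) + (\<integral>z. h z \<partial>D) * exp (- t)"
    using ih by (simp add: prob_space)
  finally show ?thesis by (simp add: ennreal_leI)
qed

lemma jensen_ln:
  fixes w y :: "nat \<Rightarrow> real" and I :: "nat set"
  assumes "finite I" "I \<noteq> {}" "\<And>i. i \<in> I \<Longrightarrow> 0 < w i" "\<And>i. i \<in> I \<Longrightarrow> 0 < y i"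
  shows "(\<Sum>i\<in>I. w i * ln (y i)) \<le> (\<Sum>i\<in>I. w i) * ln (\<Sum>i\<in>I. w i / (\<Sum>i\<in>I. w i) * y i)"
proof -
  define W where "W = (\<Sum>i\<in>I. w i)"
  have Wpos: "0 < W" unfolding W_def using assms by (intro sum_pos) auto
  have "(\<lambda>x. - ln x) (\<Sum>i\<in>I. (w i / W) *\<^sub>R y i) \<le> (\<Sum>i\<in>I. (w i / W) * (\<lambda>x. - ln x) (y i))"
  proof (rule convex_on_sum[OF assms(1,2)])
    show "convex_on {0<..} (\<lambda>x. - ln x)" using ln_concave by (simp add: concave_on_def)
    show "(\<Sum>i\<in>I. w i / W) = 1" using Wpos by (simp add: W_def flip: sum_divide_distrib)
  next
    fix i assume "i \<in> I" then show "0 \<le> w i / W" using assms(3)[of i] Wpos by simp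
  qed (use assms Wpos in auto)
  then have "(\<Sum>i\<in>I. (w i / W) * ln (y i)) \<le> ln (\<Sum>i\<in>I. w i / W * y i)"
    by (simp add: sum_negf)
  then have "W * (\<Sum>i\<in>I. (w i / W) * ln (y i)) \<le> W * ln (\<Sum>i\<in>I. w i / W * y i)"
    using Wpos by simp
  moreover have "W * (\<Sum>i\<in>I. (w i / W) * ln (y i)) = (\<Sum>i\<in>I. w i * ln (y i))"
    using Wpos by (simp add: sum_distrib_left)
  ultimately show ?thesis by (simp add: W_def)
qed



lemma mgf_sample:
  fixes D :: "nat \<Rightarrow> 'z measure" and h :: "nat \<Rightarrow> 'z \<Rightarrow> real" and t :: real
  assumes D: "\<And>i. i < n \<Longrightarrow> prob_space (D i)"
    and hm: "\<And>i. i < n \<Longrightarrow> h i \<in> borel_measurable (D i)"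
    and hb: "\<And>i z. i < n \<Longrightarrow> 0 \<le> h i z \<and> h i z \<le> 1"
  shows "(\<integral>\<^sup>+S. ennreal (\<Prod>i<n. \<Prod>j<m i. exp (- t * h i (S i j))) \<partial>sample_measure n m D)
     \<le> ennreal (\<Prod>i<n. (1 - (\<integral>z. h i z \<partial>D i) + (\<integral>z. h i z \<partial>D i) * exp (- t)) ^ m i)"
proof -
  have rb: "0 \<le> 1 - (\<integral>z. h i z \<partial>D i) + (\<integral>z. h i z \<partial>D i) * exp (- t)" if i: "i < n" for i
  proof -
    interpret prob_space "D i" using D i .
    have ih: "integrable (D i) (h i)"
      apply (rule integrable_const_bound[where B=1])
       apply (intro AE_I2) using hb i apply simp
      using hm i by simp
    have "(\<integral>z. h i z \<partial>D i) \<le> (\<integral>z. 1 \<partial>D i)"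
      by (rule integral_mono[OF ih]) (use hb i in auto)
    then have "(\<integral>z. h i z \<partial>D i) \<le> 1" by (simp add: prob_space)
    moreover have "0 \<le> (\<integral>z. h i z \<partial>D i)" by (rule integral_nonneg_AE) (use hb i in auto)
    ultimately show ?thesis by (smt (verit) exp_gt_zero mult_nonneg_nonneg)
  qed
  define D' where "D' i = (if i < n then D i else return (count_space UNIV) undefined)" for i
  have D'p: "prob_space (D' i)" for i
    unfolding D'_def using D by (auto intro: prob_space_return)
  define DD where "DD i = PiM {..<m i} (\<lambda>_. D' i)" for i
  have DDp: "prob_space (DD i)" for i unfolding DD_def by (rule prob_space_PiM[OF D'p])
  interpret DD: product_sigma_finite DD
    unfolding product_sigma_finite_def using DDp by (simp add: prob_space_imp_sigma_finite)
  have SM: "sample_measure n m D = PiM {..<n} DD"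
    unfolding sample_measure_def DD_def D'_def by (intro PiM_cong) auto
  define F where "F i s = ennreal (\<Prod>j<m i. exp (- t * h i (s j)))" for i s
  have Fm: "F i \<in> borel_measurable (DD i)" if "i \<in> {..<n}" for i
  proof -
    have [measurable]: "h i \<in> borel_measurable (D' i)" using hm that by (simp add: D'_def)
    show ?thesis unfolding F_def DD_def by measurable
  qed
  have "(\<integral>\<^sup>+S. ennreal (\<Prod>i<n. \<Prod>j<m i. exp (- t * h i (S i j))) \<partial>sample_measure n m D)
      = (\<integral>\<^sup>+S. (\<Prod>i\<in>{..<n}. F i (S i)) \<partial>PiM {..<n} DD)"
    unfolding SM F_def by (intro nn_integral_cong) (simp add: prod_ennreal prod_nonneg)
  also have "\<dots> = (\<Prod>i\<in>{..<n}. integral\<^sup>N (DD i) (F i))"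
    by (rule DD.product_nn_integral_prod) (use Fm in auto)
  also have "\<dots> \<le> (\<Prod>i<n. ennreal ((1 - (\<integral>z. h i z \<partial>D i) + (\<integral>z. h i z \<partial>D i) * exp (- t)) ^ m i))"
  proof (rule prod_mono_ennreal)
    fix i assume i: "i \<in> {..<n}"
    interpret Di: product_sigma_finite "\<lambda>_. D i"
      unfolding product_sigma_finite_def using D i by (simp add: prob_space_imp_sigma_finite)
    have [measurable]: "h i \<in> borel_measurable (D i)" using hm i by simp
    have "integral\<^sup>N (DD i) (F i) = (\<integral>\<^sup>+s. (\<Prod>j\<in>{..<m i}. ennreal (exp (- t * h i (s j)))) \<partial>PiM {..<m i} (\<lambda>_. D i))"
      unfolding DD_def F_def D'_def using i by (simp add: prod_ennreal prod_nonneg)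
    also have "\<dots> = (\<Prod>j\<in>{..<m i}. \<integral>\<^sup>+z. ennreal (exp (- t * h i z)) \<partial>D i)"
      by (rule Di.product_nn_integral_prod) auto
    also have "\<dots> \<le> (\<Prod>j\<in>{..<m i}. ennreal (1 - (\<integral>z. h i z \<partial>D i) + (\<integral>z. h i z \<partial>D i) * exp (- t)))"
      by (intro prod_mono_ennreal mgf_single) (use D hm hb i in auto)
    also have "\<dots> = ennreal ((1 - (\<integral>z. h i z \<partial>D i) + (\<integral>z. h i z \<partial>D i) * exp (- t)) ^ m i)"
      using rb[of i] i by (simp add: prod_constant ennreal_power)
    finally show "integral\<^sup>N (DD i) (F i) \<le> ennreal ((1 - (\<integral>z. h i z \<partial>D i) + (\<integral>z. h i z \<partial>D i) * exp (- t)) ^ m i)" .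
  qed
  also have "\<dots> = ennreal (\<Prod>i<n. (1 - (\<integral>z. h i z \<partial>D i) + (\<integral>z. h i z \<partial>D i) * exp (- t)) ^ m i)"
    by (rule prod_ennreal) (use rb in simp)
  finally show ?thesis .
qed



lemma final_real:
  fixes r :: "nat \<Rightarrow> real" and m :: "nat \<Rightarrow> nat" and lam :: real
  assumes n: "n \<ge> 1" and mpos: "\<And>i. i < n \<Longrightarrow> m i \<ge> 1"
    and rb: "\<And>i. i < n \<Longrightarrow> 0 \<le> r i \<and> r i \<le> 1" and lam: "lam > 0"
  defines "M \<equiv> real (\<Sum>i<n. m i)"
  shows "exp (lam * (- (M / lam) * ln (1 - (\<Sum>i<n. real (m i) / M * r i) + (\<Sum>i<n. real (m i) / M * r i) * exp (- lam / M))))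
         * (\<Prod>i<n. (1 - r i + r i * exp (- lam / M)) ^ m i) \<le> 1"
proof -
  define y where "y i = 1 - r i + r i * exp (- lam / M)" for i
  have ypos: "0 < y i" if "i < n" for i
  proof -
    have e: "0 < exp (- lam / M)" by simp
    have nn: "0 \<le> r i * exp (- lam / M)" using rb[OF that] e by simp
    show ?thesis
    proof (cases "r i = 1")
      case True then show ?thesis using e by (simp add: y_def)
    next
      case False then have "r i < 1" using rb[OF that] by auto
      then show ?thesis using nn unfolding y_def by linarith
    qed
  qed
  have "m 0 \<le> (\<Sum>i<n. m i)" by (rule member_le_sum) (use n in auto)
  then have Mpos: "0 < M" unfolding M_def using mpos[of 0] n by linarith
  have W: "(\<Sum>i<n. real (m i)) = M" unfolding M_def by simp
  have jl: "(\<Sum>i\<in>{..<n}. real (m i) * ln (y i)) \<le> (\<Sum>i\<in>{..<n}. real (m i)) * ln (\<Sum>i\<in>{..<n}. real (m i) / (\<Sum>i\<in>{..<n}. real (m i)) * y i)"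
    by (rule jensen_ln) (use n mpos ypos in \<open>auto simp: Suc_le_eq\<close>)
  have sumy: "(\<Sum>i<n. real (m i) / M * y i) = 1 - (\<Sum>i<n. real (m i) / M * r i) + (\<Sum>i<n. real (m i) / M * r i) * exp (- lam / M)"
  proof -
    have "(\<Sum>i<n. real (m i) / M * y i) = (\<Sum>i<n. real (m i) / M) - (\<Sum>i<n. real (m i) / M * r i) + (\<Sum>i<n. real (m i) / M * r i) * exp (- lam / M)"
    proof -
      have "(\<Sum>i<n. real (m i) / M * y i) = (\<Sum>i<n. real (m i) / M - real (m i) / M * r i + (real (m i) / M * r i) * exp (- lam / M))"
        by (rule sum.cong) (simp_all add: y_def algebra_simps)
      also have "\<dots> = (\<Sum>i<n. real (m i) / M) - (\<Sum>i<n. real (m i) / M * r i) + (\<Sum>i<n. real (m i) / M * r i) * exp (- lam / M)"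
        by (simp only: sum.distrib sum_subtractf sum_distrib_right)
      finally show ?thesis .
    qed
    also have "(\<Sum>i<n. real (m i) / M) = 1" using Mpos W by (simp flip: sum_divide_distrib)
    finally show ?thesis .
  qed
  have prodexp: "(\<Prod>i<n. y i ^ m i) = exp (\<Sum>i<n. real (m i) * ln (y i))"
  proof -
    have "(\<Prod>i<n. y i ^ m i) = (\<Prod>i<n. exp (real (m i) * ln (y i)))"
      by (rule prod.cong) (simp_all add: exp_of_nat_mult ypos)
    then show ?thesis by (simp add: exp_sum)
  qed
  define R where "R = (\<Sum>i<n. real (m i) / M * r i)"
  have jl2: "(\<Sum>i<n. real (m i) * ln (y i)) \<le> M * ln (1 - R + R * exp (- lam / M))"
    using jl unfolding W sumy R_def by simp
  have "lam * (- (M / lam) * ln (1 - R + R * exp (- lam / M))) = - (M * ln (1 - R + R * exp (- lam / M)))"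
    using lam by simp
  then have "exp (lam * (- (M / lam) * ln (1 - R + R * exp (- lam / M)))) * (\<Prod>i<n. y i ^ m i)
      = exp ((\<Sum>i<n. real (m i) * ln (y i)) - M * ln (1 - R + R * exp (- lam / M)))"
    unfolding prodexp by (simp add: exp_diff exp_minus field_simps)
  also have "\<dots> \<le> exp 0" using jl2 by simp
  finally show ?thesis unfolding y_def R_def by simp
qed


lemma distr_space_le: "emeasure (distr M N f) (space N) \<le> emeasure M (space M)"
  unfolding distr_def emeasure_measure_of_conv
  by (auto intro!: emeasure_mono)

lemma prior_joint_facts:
  fixes MF :: "'f measure" and HP :: "'f measure measure" and n :: nat
  assumes HP: "prob_space HP"
  defines "X \<equiv> prob_algebra MF \<Otimes>\<^sub>M PiM {..<n} (\<lambda>_. MF)"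
  shows "sets (prior_joint MF HP n) = sets X" "emeasure (prior_joint MF HP n) (space (prior_joint MF HP n)) \<le> 1"
proof -
  interpret prob_space HP by fact
  define k where "k P = distr (PiM {..<n} (\<lambda>_. P)) X (\<lambda>fs. (P, fs))" for P
  have N: "prior_joint MF HP n = bind HP k" unfolding prior_joint_def k_def X_def ..
  have ne: "space HP \<noteq> {}" by (rule not_empty)
  have sk: "sets (k P) = sets X" for P by (simp add: k_def)
  show S: "sets (prior_joint MF HP n) = sets X" unfolding N by (rule sets_bind[OF sk ne])
  have sp: "space (prior_joint MF HP n) = space X" using S by (rule sets_eq_imp_space_eq)
  define SA where "SA = subprob_algebra X"
  have SA: "subprob_algebra (k (SOME x. x \<in> space HP)) = SA"
    unfolding SA_def by (rule subprob_algebra_cong[OF sk])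
  have J: "bind HP k = join (distr HP SA k)"
    using bind_nonempty[OF ne, of k] SA by simp
  have "emeasure (join (distr HP SA k)) (space X) = (\<integral>\<^sup>+M'. emeasure M' (space X) \<partial>distr HP SA k)"
    by (rule emeasure_join[OF _ sets.top]) (simp add: SA_def)
  also have "\<dots> \<le> (\<integral>\<^sup>+M'. 1 \<partial>distr HP SA k)"
  proof (rule nn_integral_mono)
    fix M' assume "M' \<in> space (distr HP SA k)"
    then have "subprob_space M'" "sets M' = sets X" by (simp_all add: SA_def space_subprob_algebra)
    then show "emeasure M' (space X) \<le> 1"
      using subprob_space.subprob_emeasure_le_1 sets_eq_imp_space_eq by metis
  qed
  also have "\<dots> = emeasure (distr HP SA k) (space SA)" by simp
  also have "\<dots> \<le> emeasure HP (space HP)" by (rule distr_space_le)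
  also have "\<dots> = 1" by (rule emeasure_space_1)
  finally show "emeasure (prior_joint MF HP n) (space (prior_joint MF HP n)) \<le> 1"
    unfolding sp unfolding N J .
qed

lemma phi_convex:
  fixes a e :: real assumes a: "0 \<le> a" and e: "0 < e" "e < 1"
  shows "convex_on {..< 1 / (1 - e)} (\<lambda>x. - a * ln (1 - x + x * e))"
proof (rule convex_onI)
  fix t x y :: real assume t: "0 < t" "t < 1" and x: "x \<in> {..< 1 / (1 - e)}" and y: "y \<in> {..< 1 / (1 - e)}"
  have pos: "0 < 1 - z + z * e" if "z < 1 / (1 - e)" for z
  proof -
    have "z * (1 - e) < 1" using that e by (simp add: field_simps)
    then show ?thesis by (simp add: algebra_simps)
  qed
  define u where "u = 1 - x + x * e"
  define v where "v = 1 - y + y * e"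
  have u: "0 < u" unfolding u_def using x pos by simp
  have v: "0 < v" unfolding v_def using y pos by simp
  have eq: "1 - ((1 - t) *\<^sub>R x + t *\<^sub>R y) + ((1 - t) *\<^sub>R x + t *\<^sub>R y) * e = (1 - t) *\<^sub>R u + t *\<^sub>R v"
    by (simp add: u_def v_def algebra_simps)
  have cvx: "convex_on {0<..} (\<lambda>x. - ln x)" using ln_concave by (simp add: concave_on_def)
  have "- ln ((1 - t) *\<^sub>R u + t *\<^sub>R v) \<le> (1 - t) * (- ln u) + t * (- ln v)"
    using convex_onD[OF cvx, of t u v] t u v by simp
  then have "a * (- ln ((1 - t) *\<^sub>R u + t *\<^sub>R v)) \<le> a * ((1 - t) * (- ln u) + t * (- ln v))"
    using a by (rule mult_left_mono)
  then show "- a * ln (1 - ((1 - t) *\<^sub>R x + t *\<^sub>R y) + ((1 - t) *\<^sub>R x + t *\<^sub>R y) * e)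
        \<le> (1 - t) * (- a * ln (1 - x + x * e)) + t * (- a * ln (1 - y + y * e))"
    unfolding eq u_def[symmetric] v_def[symmetric] by (simp add: algebra_simps)
qed (simp add: convex_halfspace_lt)



lemma marginal:
  fixes HQ :: "'a measure" and Q :: "nat \<Rightarrow> 'f measure" and h :: "'f \<Rightarrow> real"
  assumes HQ: "prob_space HQ" and Q: "\<And>i. i < n \<Longrightarrow> prob_space (Q i)" and i: "i < n"
    and hm[measurable]: "h \<in> borel_measurable (Q i)" and hb: "\<And>x. \<bar>h x\<bar> \<le> B"
  shows "(\<integral>\<omega>. h (snd \<omega> i) \<partial>(HQ \<Otimes>\<^sub>M PiM {..<n} Q)) = (\<integral>x. h x \<partial>Q i)"
proof -
  have PQ: "prob_space (PiM {..<n} Q)" by (rule prob_space_PiM) (use Q in auto)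
  interpret pair_prob_space HQ "PiM {..<n} Q"
    using HQ PQ by (simp add: pair_prob_space_def pair_sigma_finite_def prob_space_imp_sigma_finite)
  have cm[measurable]: "(\<lambda>y. y i) \<in> measurable (PiM {..<n} Q) (Q i)"
    by (rule measurable_component_singleton) (use i in simp)
  have int: "integrable (HQ \<Otimes>\<^sub>M PiM {..<n} Q) (\<lambda>(x, y). h (y i))"
    apply (rule P.integrable_const_bound[where B=B])
     apply (intro AE_I2) apply (simp add: split_beta hb)
    by measurable
  have "(\<integral>\<omega>. h (snd \<omega> i) \<partial>(HQ \<Otimes>\<^sub>M PiM {..<n} Q)) = (\<integral>y. (\<integral>x. h (y i) \<partial>HQ) \<partial>PiM {..<n} Q)"
    using integral_snd[OF int] by (simp add: split_beta')
  also have "\<dots> = (\<integral>y. h (y i) \<partial>PiM {..<n} Q)"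
    using M1.prob_space by simp
  also have "\<dots> = (\<integral>x. h x \<partial>distr (PiM {..<n} Q) (Q i) (\<lambda>y. y i))"
    by (rule integral_distr[symmetric]) measurable
  also have "distr (PiM {..<n} Q) (Q i) (\<lambda>y. y i) = Q i"
    by (rule distr_PiM_component) (use Q i in auto)
  finally show ?thesis .
qed


theorem theorem5:
  fixes MF :: "'f measure" and MZ :: "'z measure"
    and n :: nat and m :: "nat \<Rightarrow> nat"
    and D :: "nat \<Rightarrow> 'z measure" and l :: "nat \<Rightarrow> 'f \<Rightarrow> 'z \<Rightarrow> real"
    and HP :: "'f measure measure"
    and delta lam :: real
  assumes n_pos: "n \<ge> 1"
    and m_pos: "\<And>i. i < n \<Longrightarrow> m i \<ge> 1"
    and D_prob: "\<And>i. i < n \<Longrightarrow> prob_space (D i)"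
    and D_sets: "\<And>i. i < n \<Longrightarrow> sets (D i) = sets MZ"
    and l_meas: "\<And>i. i < n \<Longrightarrow> (\<lambda>(f, z). l i f z) \<in> borel_measurable (MF \<Otimes>\<^sub>M MZ)"
    and l_range: "\<And>i f z. i < n \<Longrightarrow> 0 \<le> l i f z \<and> l i f z \<le> 1"
    and HP_prob: "prob_space HP"
    and HP_sets: "sets HP = sets (prob_algebra MF)"
    and delta_pos: "delta > 0"
    and lam_pos: "lam > 0"
  shows "\<exists>A \<in> sets (sample_measure n m D).
           measure (sample_measure n m D) A \<ge> 1 - delta \<and>
           (\<forall>S \<in> A. \<forall>HQ :: 'f measure measure. \<forall>Q :: nat \<Rightarrow> 'f measure.
              prob_space HQ \<and> sets HQ = sets (prob_algebra MF) \<and>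
              (\<forall>i < n. Q i \<in> space (prob_algebra MF)) \<longrightarrow>
              (let M = real (\<Sum>i<n. m i);
                   RS = (\<Sum>i<n. real (m i) / M * risk (l i) (D i) (Q i));
                   RSh = (\<Sum>i<n. real (m i) / M * emp_risk (l i) (m i) (S i) (Q i))
               in ereal (- (M / lam) * ln (1 - RS + RS * exp (- lam / M)))
                  \<le> ereal RSh + (KL_div (post_joint HQ n Q) (prior_joint MF HP n)
                                   + ereal (ln (1 / delta))) / ereal lam))"
proof -
  define M where "M = real (\<Sum>i<n. m i)"
  have "m 0 \<le> (\<Sum>i<n. m i)" by (rule member_le_sum) (use n_pos in auto)
  then have Mpos: "0 < M" unfolding M_def using m_pos[of 0] n_pos by linarith
  define e where "e = exp (- lam / M)"
  have e0: "0 < e" unfolding e_def by simp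
  have e1: "e < 1" unfolding e_def using lam_pos Mpos by simp
  define \<Phi> where "\<Phi> x = - (M / lam) * ln (1 - x + x * e)" for x
  define r where "r i f = (\<integral>z. l i f z \<partial>D i)" for i f
  define Rf where "Rf fs = (\<Sum>i<n. real (m i) / M * r i (fs i))" for fs :: "nat \<Rightarrow> 'f"
  define Rh where "Rh S fs = (\<Sum>i<n. real (m i) / M * (1 / real (m i) * (\<Sum>j<m i. l i (fs i) (S i j))))"
    for S :: "nat \<Rightarrow> nat \<Rightarrow> 'z" and fs :: "nat \<Rightarrow> 'f"
  define g where "g S fs = lam * \<Phi> (Rf fs) - lam * Rh S fs" for S fs
  define X where "X = prob_algebra MF \<Otimes>\<^sub>M PiM {..<n} (\<lambda>_. MF)"
  define N where "N = prior_joint MF HP n"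
  define SM where "SM = sample_measure n m D"
  define Z where "Z S = (\<integral>\<^sup>+\<omega>. ennreal (exp (g S (snd \<omega>))) \<partial>N)" for S
  define A where "A = {S \<in> space SM. Z S \<le> ennreal (1 / delta)}"
  have Wsum: "(\<Sum>i<n. real (m i) / M) = 1" using Mpos by (simp add: M_def flip: sum_divide_distrib)
  have rb: "0 \<le> r i f \<and> r i f \<le> 1" if i: "i < n" for i f
  proof -
    interpret prob_space "D i" using D_prob i .
    have 0: "0 \<le> r i f" unfolding r_def by (rule integral_nonneg_AE) (use l_range i in auto)
    have "r i f \<le> 1"
    proof (cases "integrable (D i) (l i f)")
      case True
      have "(\<integral>z. l i f z \<partial>D i) \<le> (\<integral>z. 1 \<partial>D i)"
        by (rule integral_mono[OF True]) (use l_range i in auto)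
      then show ?thesis by (simp add: r_def prob_space)
    next
      case False then show ?thesis by (simp add: r_def not_integrable_integral_eq)
    qed
    with 0 show ?thesis by simp
  qed
  have Rfb: "0 \<le> Rf fs \<and> Rf fs \<le> 1" for fs
  proof -
    have "0 \<le> Rf fs" unfolding Rf_def using rb Mpos by (intro sum_nonneg) simp
    moreover have "Rf fs \<le> (\<Sum>i<n. real (m i) / M * 1)" unfolding Rf_def
      by (intro sum_mono mult_left_mono) (use rb Mpos in auto)
    ultimately show ?thesis using Wsum by simp
  qed
  have Rhb: "0 \<le> Rh S fs \<and> Rh S fs \<le> 1" for S fs
  proof -
    have inner: "0 \<le> 1 / real (m i) * (\<Sum>j<m i. l i (fs i) (S i j)) \<and> 1 / real (m i) * (\<Sum>j<m i. l i (fs i) (S i j)) \<le> 1"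
      if i: "i < n" for i
    proof -
      have "(\<Sum>j<m i. l i (fs i) (S i j)) \<le> (\<Sum>j<m i. 1)" by (intro sum_mono) (use l_range i in auto)
      moreover have "0 \<le> (\<Sum>j<m i. l i (fs i) (S i j))" by (intro sum_nonneg) (use l_range i in auto)
      moreover have "0 < real (m i)" using m_pos[OF i] by simp
      ultimately show ?thesis by (simp add: field_simps)
    qed
    have "0 \<le> Rh S fs" unfolding Rh_def
    proof (rule sum_nonneg)
      fix i assume "i \<in> {..<n}"
      then have nn: "0 \<le> 1 / real (m i) * (\<Sum>j<m i. l i (fs i) (S i j))" using inner by blast
      show "0 \<le> real (m i) / M * (1 / real (m i) * (\<Sum>j<m i. l i (fs i) (S i j)))"
        by (rule mult_nonneg_nonneg[OF _ nn]) (use Mpos in simp)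
    qed
    moreover have "Rh S fs \<le> (\<Sum>i<n. real (m i) / M * 1)" unfolding Rh_def
      by (intro sum_mono mult_left_mono) (use inner Mpos in auto)
    ultimately show ?thesis using Wsum by simp
  qed
  have \<Phi>b: "0 \<le> \<Phi> x \<and> \<Phi> x \<le> 1" if x: "0 \<le> x" "x \<le> 1" for x
  proof -
    have "x * e \<le> x" using x e1 by (intro mult_left_le) auto
    then have l1: "1 - x + x * e \<le> 1" using x by linarith
    have "0 \<le> (1 - x) * (1 - e)" using x e1 by (intro mult_nonneg_nonneg) auto
    moreover have "(1 - x) * (1 - e) = 1 - e - x + x * e" by (simp add: algebra_simps)
    ultimately have l2: "e \<le> 1 - x + x * e" by linarith
    have "ln (1 - x + x * e) \<le> 0" using l1 l2 e0 by simp
    moreover have "ln e \<le> ln (1 - x + x * e)" using l2 e0 by simp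
    moreover have "ln e = - lam / M" unfolding e_def by simp
    ultimately have "- lam / M \<le> ln (1 - x + x * e) \<and> ln (1 - x + x * e) \<le> 0" by simp
    then have "- (M / lam) * 0 \<le> - (M / lam) * ln (1 - x + x * e) \<and> - (M / lam) * ln (1 - x + x * e) \<le> - (M / lam) * (- lam / M)"
      using Mpos lam_pos by (intro conjI mult_left_mono_neg) auto
    then show ?thesis using Mpos lam_pos by (simp add: \<Phi>_def)
  qed
  have gb: "\<bar>g S fs\<bar> \<le> lam" for S fs
  proof -
    have "0 \<le> \<Phi> (Rf fs) \<and> \<Phi> (Rf fs) \<le> 1" using \<Phi>b Rfb by blast
    moreover have "0 \<le> Rh S fs \<and> Rh S fs \<le> 1" by (rule Rhb)
    ultimately have "\<bar>\<Phi> (Rf fs) - Rh S fs\<bar> \<le> 1" by linarith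
    then have "lam * \<bar>\<Phi> (Rf fs) - Rh S fs\<bar> \<le> lam * 1" using lam_pos by (intro mult_left_mono) auto
    then show ?thesis unfolding g_def using lam_pos by (simp add: abs_mult flip: right_diff_distrib)
  qed
  have setsN: "sets N = sets X" unfolding N_def X_def by (rule prior_joint_facts(1)[OF HP_prob])
  have spaceN: "space N = space X" by (rule sets_eq_imp_space_eq[OF setsN])
  have N1: "emeasure N (space N) \<le> 1" unfolding N_def by (rule prior_joint_facts(2)[OF HP_prob])
  interpret N: finite_measure N
    by (rule finite_measureI) (use N1 in \<open>auto simp: top_unique\<close>)
  have SMp: "prob_space SM" unfolding SM_def sample_measure_def
    by (intro prob_space_PiM) (use D_prob in auto)
  interpret SM: prob_space SM by (rule SMp)
  interpret SMN: pair_sigma_finite SM N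
    by (simp add: pair_sigma_finite_def SM.sigma_finite_measure_axioms N.sigma_finite_measure_axioms)
  have lm: "(\<lambda>(f, z). l i f z) \<in> borel_measurable (MF \<Otimes>\<^sub>M D i)" if i: "i < n" for i
    using l_meas[OF i] by (simp cong: measurable_cong_sets add: sets_pair_measure_cong[OF refl D_sets[OF i]])
  have rm: "r i \<in> borel_measurable MF" if i: "i < n" for i
  proof -
    interpret prob_space "D i" using D_prob i .
    show ?thesis unfolding r_def by (rule borel_measurable_lebesgue_integral) (use lm[OF i] in simp)
  qed
  have c1: "(\<lambda>p. snd (snd p) i) \<in> measurable (SM \<Otimes>\<^sub>M X) MF" if i: "i < n" for i
  proof -
    have "(\<lambda>y. y i) \<in> measurable (PiM {..<n} (\<lambda>_. MF)) MF"
      by (rule measurable_component_singleton) (use i in simp)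
    then show ?thesis unfolding X_def by measurable
  qed
  have cS: "(\<lambda>y. y i j) \<in> measurable SM MZ" if i: "i < n" and j: "j < m i" for i j
  proof -
    have "(\<lambda>y. y i) \<in> measurable SM (PiM {..<m i} (\<lambda>_. D i))"
      unfolding SM_def sample_measure_def by (rule measurable_component_singleton) (use i in simp)
    moreover have "(\<lambda>y. y j) \<in> measurable (PiM {..<m i} (\<lambda>_. D i)) (D i)"
      by (rule measurable_component_singleton) (use j in simp)
    ultimately have "(\<lambda>y. y i j) \<in> measurable SM (D i)" by (rule measurable_compose)
    then show "(\<lambda>y. y i j) \<in> measurable SM MZ" by (simp cong: measurable_cong_sets add: D_sets[OF i])
  qed
  have c2: "(\<lambda>p. fst p i j) \<in> measurable (SM \<Otimes>\<^sub>M X) MZ" if i: "i < n" and j: "j < m i" for i j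
  proof -
    have "(\<lambda>y. y i) \<in> measurable SM (PiM {..<m i} (\<lambda>_. D i))"
      unfolding SM_def sample_measure_def by (rule measurable_component_singleton) (use i in simp)
    moreover have "(\<lambda>y. y j) \<in> measurable (PiM {..<m i} (\<lambda>_. D i)) (D i)"
      by (rule measurable_component_singleton) (use j in simp)
    ultimately have "(\<lambda>y. y i j) \<in> measurable SM (D i)" by (rule measurable_compose)
    then have "(\<lambda>y. y i j) \<in> measurable SM MZ" by (simp cong: measurable_cong_sets add: D_sets[OF i])
    then show ?thesis by measurable
  qed
  have lc[measurable]: "(\<lambda>p. l i (snd (snd p) i) (fst p i j)) \<in> borel_measurable (SM \<Otimes>\<^sub>M X)"
    if i: "i \<in> {..<n}" and j: "j \<in> {..<m i}" for i j
    using measurable_compose[OF measurable_Pair[OF c1 c2] l_meas] i j by simp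
  have rc[measurable]: "(\<lambda>p. r i (snd (snd p) i)) \<in> borel_measurable (SM \<Otimes>\<^sub>M X)"
    if i: "i \<in> {..<n}" for i
    using measurable_compose[OF c1 rm] i by simp
  have gm: "(\<lambda>p. g (fst p) (snd (snd p))) \<in> borel_measurable (SM \<Otimes>\<^sub>M X)"
    unfolding g_def \<Phi>_def Rf_def Rh_def by measurable
  have gmN: "(\<lambda>(S, \<omega>). ennreal (exp (g S (snd \<omega>)))) \<in> borel_measurable (SM \<Otimes>\<^sub>M N)"
  proof -
    have "(\<lambda>p. ennreal (exp (g (fst p) (snd (snd p))))) \<in> borel_measurable (SM \<Otimes>\<^sub>M X)"
      using gm by measurable
    then have "(\<lambda>(S, \<omega>). ennreal (exp (g S (snd \<omega>)))) \<in> borel_measurable (SM \<Otimes>\<^sub>M X)"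
      by (simp only: case_prod_beta')
    then show ?thesis
      unfolding measurable_cong_sets[OF sets_pair_measure_cong[OF refl setsN] refl] .
  qed
  have F4: "(\<integral>\<^sup>+S. ennreal (exp (g S (snd \<omega>))) \<partial>SM) \<le> 1" if \<omega>: "\<omega> \<in> space N" for \<omega>
  proof -
    define fs where "fs = snd \<omega>"
    have "fs \<in> space (PiM {..<n} (\<lambda>_. MF))"
      using \<omega> unfolding spaceN X_def fs_def space_pair_measure by (rule mem_Times_iff[THEN iffD1, THEN conjunct2])
    then have fsP: "fs \<in> (\<Pi>\<^sub>E i\<in>{..<n}. space MF)" unfolding space_PiM .
    have fs: "fs i \<in> space MF" if i: "i < n" for i
      using PiE_mem[OF fsP] i by simp
    define t where "t = lam / M"
    have eg: "exp (g S fs) = exp (lam * \<Phi> (Rf fs)) * (\<Prod>i<n. \<Prod>j<m i. exp (- t * l i (fs i) (S i j)))" for S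
    proof -
      have "lam * Rh S fs = (\<Sum>i<n. lam * (real (m i) / M * (1 / real (m i) * (\<Sum>j<m i. l i (fs i) (S i j)))))"
        unfolding Rh_def by (rule sum_distrib_left)
      also have "\<dots> = (\<Sum>i<n. \<Sum>j<m i. t * l i (fs i) (S i j))"
      proof (rule sum.cong[OF refl])
        fix i assume i: "i \<in> {..<n}"
        then have "0 < real (m i)" using m_pos by (simp add: Suc_le_eq)
        then show "lam * (real (m i) / M * (1 / real (m i) * (\<Sum>j<m i. l i (fs i) (S i j)))) = (\<Sum>j<m i. t * l i (fs i) (S i j))"
          by (simp add: t_def sum_distrib_left field_simps)
      qed
      finally have "lam * Rh S fs = (\<Sum>i<n. \<Sum>j<m i. t * l i (fs i) (S i j))" .
      then have "exp (- (lam * Rh S fs)) = (\<Prod>i<n. \<Prod>j<m i. exp (- t * l i (fs i) (S i j)))"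
        by (simp add: exp_sum sum_negf flip: exp_sum)
      then show ?thesis unfolding g_def by (simp add: exp_diff exp_minus field_simps)
    qed
    have "(\<integral>\<^sup>+S. ennreal (exp (g S fs)) \<partial>SM)
        = (\<integral>\<^sup>+S. ennreal (exp (lam * \<Phi> (Rf fs))) * ennreal (\<Prod>i<n. \<Prod>j<m i. exp (- t * l i (fs i) (S i j))) \<partial>SM)"
      unfolding eg by (intro nn_integral_cong) (simp add: ennreal_mult prod_nonneg)
    also have "\<dots> = ennreal (exp (lam * \<Phi> (Rf fs))) * (\<integral>\<^sup>+S. ennreal (\<Prod>i<n. \<Prod>j<m i. exp (- t * l i (fs i) (S i j))) \<partial>SM)"
    proof (rule nn_integral_cmult)
      have [measurable]: "(\<lambda>S. l i (fs i) (S i j)) \<in> borel_measurable SM" if "i \<in> {..<n}" "j \<in> {..<m i}" for i j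
      proof -
        have "l i (fs i) \<in> borel_measurable MZ" using measurable_Pair2[OF l_meas fs] that by simp
        then show ?thesis using measurable_compose[OF cS] that by simp
      qed
      show "(\<lambda>S. ennreal (\<Prod>i<n. \<Prod>j<m i. exp (- t * l i (fs i) (S i j)))) \<in> borel_measurable SM"
        by measurable
    qed
    also have "\<dots> \<le> ennreal (exp (lam * \<Phi> (Rf fs))) * ennreal (\<Prod>i<n. (1 - (\<integral>z. l i (fs i) z \<partial>D i) + (\<integral>z. l i (fs i) z \<partial>D i) * exp (- t)) ^ m i)"
    proof (intro mult_left_mono zero_le)
      show "(\<integral>\<^sup>+S. ennreal (\<Prod>i<n. \<Prod>j<m i. exp (- t * l i (fs i) (S i j))) \<partial>SM) \<le> ennreal (\<Prod>i<n. (1 - (\<integral>z. l i (fs i) z \<partial>D i) + (\<integral>z. l i (fs i) z \<partial>D i) * exp (- t)) ^ m i)"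
        unfolding SM_def
      proof (rule mgf_sample)
        fix i assume i: "i < n"
        show "prob_space (D i)" using D_prob[OF i] .
        show "l i (fs i) \<in> borel_measurable (D i)"
          using measurable_Pair2[OF lm[OF i] fs[OF i]] by simp
        show "\<And>z. 0 \<le> l i (fs i) z \<and> l i (fs i) z \<le> 1" using l_range[OF i] by blast
      qed
    qed
    also have "\<dots> = ennreal (exp (lam * \<Phi> (Rf fs)) * (\<Prod>i<n. (1 - r i (fs i) + r i (fs i) * e) ^ m i))"
    proof -
      have "(\<Prod>i<n. (1 - (\<integral>z. l i (fs i) z \<partial>D i) + (\<integral>z. l i (fs i) z \<partial>D i) * exp (- t)) ^ m i)
          = (\<Prod>i<n. (1 - r i (fs i) + r i (fs i) * e) ^ m i)"
        by (simp add: r_def t_def e_def)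
      then show ?thesis by (simp add: ennreal_mult')
    qed
    also have "\<dots> \<le> ennreal 1"
    proof (rule ennreal_leI)
      have "exp (lam * (- (M / lam) * ln (1 - (\<Sum>i<n. real (m i) / M * r i (fs i)) + (\<Sum>i<n. real (m i) / M * r i (fs i)) * exp (- lam / M))))
         * (\<Prod>i<n. (1 - r i (fs i) + r i (fs i) * exp (- lam / M)) ^ m i) \<le> 1"
        unfolding M_def by (rule final_real[OF n_pos m_pos _ lam_pos]) (use rb in auto)
      then show "exp (lam * \<Phi> (Rf fs)) * (\<Prod>i<n. (1 - r i (fs i) + r i (fs i) * e) ^ m i) \<le> 1"
        unfolding \<Phi>_def Rf_def e_def .
    qed
    finally show ?thesis by (simp add: fs_def)
  qed
  have Zm[measurable]: "Z \<in> borel_measurable SM"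
    unfolding Z_def using N.borel_measurable_nn_integral[OF gmN] by simp
  have intZ: "(\<integral>\<^sup>+S. Z S \<partial>SM) \<le> 1"
  proof -
    have "(\<integral>\<^sup>+S. Z S \<partial>SM) = (\<integral>\<^sup>+\<omega>. (\<integral>\<^sup>+S. ennreal (exp (g S (snd \<omega>))) \<partial>SM) \<partial>N)"
      unfolding Z_def using SMN.Fubini'[OF gmN] by simp
    also have "\<dots> \<le> (\<integral>\<^sup>+\<omega>. 1 \<partial>N)"
      by (rule nn_integral_mono) (rule F4)
    also have "\<dots> \<le> 1" using N1 by simp
    finally show ?thesis .
  qed
  have Asets: "A \<in> sets SM" unfolding A_def by measurable
  have Ameas: "measure SM A \<ge> 1 - delta"
  proof -
    define B where "B = {S \<in> space SM. 1 \<le> ennreal delta * Z S}"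
    have sub: "space SM - A \<subseteq> B"
    proof
      fix S assume S: "S \<in> space SM - A"
      then have lt: "ennreal (1 / delta) < Z S" unfolding A_def by auto
      have "1 = ennreal delta * ennreal (1 / delta)"
        using delta_pos by (simp flip: ennreal_mult)
      also have "\<dots> \<le> ennreal delta * Z S" using lt by (intro mult_left_mono) auto
      finally show "S \<in> B" using S unfolding B_def by auto
    qed
    have "emeasure SM B \<le> ennreal delta * (\<integral>\<^sup>+S. Z S * indicator (space SM) S \<partial>SM)"
      unfolding B_def by (rule nn_integral_Markov_inequality) auto
    also have "(\<integral>\<^sup>+S. Z S * indicator (space SM) S \<partial>SM) = (\<integral>\<^sup>+S. Z S \<partial>SM)"
      by (rule nn_integral_cong) simp
    also have "ennreal delta * (\<integral>\<^sup>+S. Z S \<partial>SM) \<le> ennreal delta * 1"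
      using intZ by (rule mult_left_mono) simp
    finally have "emeasure SM B \<le> ennreal delta" by simp
    moreover have "emeasure SM (space SM - A) \<le> emeasure SM B"
      by (rule emeasure_mono[OF sub]) (simp add: B_def)
    ultimately have "emeasure SM (space SM - A) \<le> ennreal delta" by simp
    then have "measure SM (space SM - A) \<le> delta"
      using delta_pos by (simp add: SM.emeasure_eq_measure)
    moreover have "measure SM (space SM - A) = 1 - measure SM A"
      using Asets by (rule SM.prob_compl)
    ultimately show ?thesis by simp
  qed
  have main: "ereal (- (M / lam) * ln (1 - RS + RS * exp (- lam / M)))
      \<le> ereal RSh + (KL_div (post_joint HQ n Q) N + ereal (ln (1 / delta))) / ereal lam"
    if S: "S \<in> A" and HQ: "prob_space HQ" and HQs: "sets HQ = sets (prob_algebra MF)"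
      and Qa: "\<forall>i<n. Q i \<in> space (prob_algebra MF)"
      and RS_def: "RS = (\<Sum>i<n. real (m i) / M * risk (l i) (D i) (Q i))"
      and RSh_def: "RSh = (\<Sum>i<n. real (m i) / M * emp_risk (l i) (m i) (S i) (Q i))"
    for S HQ Q RS RSh
  proof -
    define Post where "Post = post_joint HQ n Q"
    have Qp: "prob_space (Q i)" and Qs: "sets (Q i) = sets MF" if "i < n" for i
      using Qa that by (auto simp: space_prob_algebra)
    show ?thesis
    proof (cases "sets Post = sets N \<and> absolutely_continuous N Post \<and> integrable Post (entropy_density (exp 1) N Post)")
      case False
      then have "KL_div Post N = \<infinity>" by (simp add: KL_div_def)
      then show ?thesis using lam_pos by (simp add: Post_def)
    next
      case True
      then have sPN: "sets Post = sets N" and ac: "absolutely_continuous N Post"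
        and ient: "integrable Post (entropy_density (exp 1) N Post)" by auto
      define K where "K = KL_divergence (exp 1) N Post"
      have KL: "KL_div Post N = ereal K" using True by (simp add: KL_div_def K_def)
      have PQ: "prob_space (PiM {..<n} Q)" by (rule prob_space_PiM) (use Qp in auto)
      interpret PP: pair_prob_space HQ "PiM {..<n} Q"
        using HQ PQ by (simp add: pair_prob_space_def pair_sigma_finite_def prob_space_imp_sigma_finite)
      have Pp: "prob_space Post" unfolding Post_def post_joint_def by (rule PP.P.prob_space_axioms)
      interpret P: prob_space Post by (rule Pp)
      have sPX: "sets Post = sets X" using sPN setsN by simp
      have SinSM: "S \<in> space SM" using S unfolding A_def by auto
      define G where "G \<omega> = g S (snd \<omega>)" for \<omega> :: "'f measure \<times> (nat \<Rightarrow> 'f)"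
      have GX: "G \<in> borel_measurable X"
        using measurable_Pair2[OF gm SinSM] unfolding G_def by simp
      have GN: "G \<in> borel_measurable N" using GX by (simp cong: measurable_cong_sets add: setsN)
      have Gb: "\<bar>G \<omega>\<bar> \<le> lam" for \<omega> unfolding G_def by (rule gb)
      have dv1: "(\<integral>x. G x \<partial>Post) \<le> KL_divergence (exp 1) N Post + ln (\<integral>x. exp (G x) \<partial>N)"
        and dv2: "0 < (\<integral>x. exp (G x) \<partial>N)"
        using DV[OF N.finite_measure_axioms Pp sPN ac ient GN Gb] by auto
      have Gle: "G x \<le> lam" for x using Gb[of x] by simp
      have iexpG: "integrable N (\<lambda>x. exp (G x))"
        apply (rule N.integrable_const_bound[where B="exp lam"])
         apply (intro AE_I2) apply (simp add: Gle)
        using GN by measurable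
      have "ennreal (\<integral>x. exp (G x) \<partial>N) = Z S"
        unfolding Z_def G_def[symmetric] by (rule nn_integral_eq_integral[OF iexpG, symmetric]) simp
      also have "\<dots> \<le> ennreal (1 / delta)" using S unfolding A_def by auto
      finally have "(\<integral>x. exp (G x) \<partial>N) \<le> 1 / delta" using delta_pos by (simp add: ennreal_le_iff)
      then have lnb: "ln (\<integral>x. exp (G x) \<partial>N) \<le> ln (1 / delta)"
        by (rule ln_le_cancel_iff[THEN iffD2, rotated 2]) (use dv2 delta_pos in auto)
      have sPost: "sets Post = sets (HQ \<Otimes>\<^sub>M PiM {..<n} Q)" by (simp add: Post_def post_joint_def)
      have comp: "(\<lambda>\<omega>. snd \<omega> i) \<in> measurable Post MF" if i: "i < n" for i
      proof -
        have "(\<lambda>y. y i) \<in> measurable (PiM {..<n} (\<lambda>_. MF)) MF"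
          by (rule measurable_component_singleton) (use i in simp)
        then have "(\<lambda>\<omega>. snd \<omega> i) \<in> measurable X MF" unfolding X_def by measurable
        then show ?thesis by (simp cong: measurable_cong_sets add: sPX)
      qed
      have marg: "(\<integral>\<omega>. h (snd \<omega> i) \<partial>Post) = (\<integral>x. h x \<partial>Q i)"
        if i: "i < n" and hm: "h \<in> borel_measurable MF" and hb: "\<And>x. \<bar>h x\<bar> \<le> 1" for i and h :: "'f \<Rightarrow> real"
        unfolding Post_def post_joint_def
        by (rule marginal[OF HQ Qp i _ hb]) (use hm in \<open>unfold measurable_cong_sets[OF Qs[OF i] refl]\<close>)
      have intb: "integrable Post f" if "f \<in> borel_measurable Post" "\<And>x. \<bar>f x\<bar> \<le> 1" for f :: "_ \<Rightarrow> real"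
        by (rule P.integrable_const_bound[where B=1]) (use that in auto)
      have rP: "(\<lambda>\<omega>. r i (snd \<omega> i)) \<in> borel_measurable Post" if i: "i < n" for i
        using measurable_compose[OF comp[OF i] rm[OF i]] .
      have RfP: "(\<lambda>\<omega>. Rf (snd \<omega>)) \<in> borel_measurable Post"
        unfolding Rf_def using rP by (intro borel_measurable_sum borel_measurable_times) auto
      have lP: "(\<lambda>\<omega>. l i (snd \<omega> i) (S i j)) \<in> borel_measurable Post" if i: "i < n" and j: "j < m i" for i j
      proof -
        have "S i j \<in> space MZ" using measurable_space[OF cS[OF i j] SinSM] .
        then have "(\<lambda>f. l i f (S i j)) \<in> borel_measurable MF" using measurable_Pair1[OF l_meas[OF i]] by simp
        from measurable_compose[OF comp[OF i] this] show ?thesis by simp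
      qed
      have RhP: "(\<lambda>\<omega>. Rh S (snd \<omega>)) \<in> borel_measurable Post"
        unfolding Rh_def using lP
        by (intro borel_measurable_sum borel_measurable_times borel_measurable_const) auto
      have lMF: "(\<lambda>f. l i f (S i j)) \<in> borel_measurable MF" if i: "i < n" and j: "j < m i" for i j
      proof -
        have "S i j \<in> space MZ" using measurable_space[OF cS[OF i j] SinSM] .
        then show ?thesis using measurable_Pair1[OF l_meas[OF i]] by simp
      qed
      have iR: "integrable Post (\<lambda>\<omega>. r i (snd \<omega> i))" if i: "i < n" for i
        by (rule intb[OF rP[OF i]]) (use rb[OF i] in auto)
      have iL: "integrable Post (\<lambda>\<omega>. l i (snd \<omega> i) (S i j))" if i: "i < n" and j: "j < m i" for i j
        by (rule intb[OF lP[OF i j]]) (use l_range[OF i] in auto)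
      have riskeq: "(\<integral>f. r i f \<partial>Q i) = risk (l i) (D i) (Q i)" if i: "i < n" for i
      proof -
        interpret QD: pair_prob_space "Q i" "D i"
          using Qp[OF i] D_prob[OF i] by (simp add: pair_prob_space_def pair_sigma_finite_def prob_space_imp_sigma_finite)
        have lm2: "(\<lambda>(f, z). l i f z) \<in> borel_measurable (Q i \<Otimes>\<^sub>M D i)"
          using l_meas[OF i] unfolding measurable_cong_sets[OF sets_pair_measure_cong[OF Qs[OF i] D_sets[OF i]] refl] .
        have int: "integrable (Q i \<Otimes>\<^sub>M D i) (\<lambda>(f, z). l i f z)"
          apply (rule QD.P.integrable_const_bound[where B=1])
           apply (intro AE_I2) using l_range[OF i] apply (simp add: split_beta)
          by (rule lm2)
        show ?thesis
          unfolding r_def risk_def rloss_def using QD.Fubini_integral[OF int] by simp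
      qed
      have ERf: "(\<integral>\<omega>. Rf (snd \<omega>) \<partial>Post) = RS"
      proof -
        have "(\<integral>\<omega>. Rf (snd \<omega>) \<partial>Post) = (\<Sum>i<n. \<integral>\<omega>. real (m i) / M * r i (snd \<omega> i) \<partial>Post)"
          unfolding Rf_def by (rule Bochner_Integration.integral_sum) (use iR in auto)
        also have "\<dots> = RS" unfolding RS_def
        proof (rule sum.cong[OF refl])
          fix i assume "i \<in> {..<n}"
          then have i: "i < n" by simp
          have "(\<integral>\<omega>. r i (snd \<omega> i) \<partial>Post) = (\<integral>f. r i f \<partial>Q i)"
            by (rule marg[OF i rm[OF i]]) (use rb[OF i] in auto)
          then show "(\<integral>\<omega>. real (m i) / M * r i (snd \<omega> i) \<partial>Post) = real (m i) / M * risk (l i) (D i) (Q i)"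
            using riskeq[OF i] by simp
        qed
        finally show ?thesis .
      qed
      have ERh: "(\<integral>\<omega>. Rh S (snd \<omega>) \<partial>Post) = RSh"
      proof -
        have inner: "(\<integral>\<omega>. (\<Sum>j<m i. l i (snd \<omega> i) (S i j)) \<partial>Post) = (\<Sum>j<m i. \<integral>f. l i f (S i j) \<partial>Q i)"
          if i: "i < n" for i
        proof -
          have "(\<integral>\<omega>. (\<Sum>j<m i. l i (snd \<omega> i) (S i j)) \<partial>Post) = (\<Sum>j<m i. \<integral>\<omega>. l i (snd \<omega> i) (S i j) \<partial>Post)"
            by (rule Bochner_Integration.integral_sum) (use iL i in auto)
          also have "\<dots> = (\<Sum>j<m i. \<integral>f. l i f (S i j) \<partial>Q i)"
            by (rule sum.cong[OF refl], rule marg[OF i lMF[OF i]]) (use l_range[OF i] in auto)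
          finally show ?thesis .
        qed
        have isum: "integrable Post (\<lambda>\<omega>. (\<Sum>j<m i. l i (snd \<omega> i) (S i j)))" if i: "i < n" for i
          by (rule Bochner_Integration.integrable_sum) (use iL i in auto)
        have "(\<integral>\<omega>. Rh S (snd \<omega>) \<partial>Post) = (\<Sum>i<n. \<integral>\<omega>. real (m i) / M * (1 / real (m i) * (\<Sum>j<m i. l i (snd \<omega> i) (S i j))) \<partial>Post)"
          unfolding Rh_def
        proof (rule Bochner_Integration.integral_sum)
          fix i assume "i \<in> {..<n}"
          then have i: "i < n" by simp
          show "integrable Post (\<lambda>\<omega>. real (m i) / M * (1 / real (m i) * (\<Sum>j<m i. l i (snd \<omega> i) (S i j))))"
            by (intro integrable_mult_right isum[OF i])
        qed
        also have "\<dots> = RSh" unfolding RSh_def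
        proof (rule sum.cong[OF refl])
          fix i assume "i \<in> {..<n}"
          then have i: "i < n" by simp
          show "(\<integral>\<omega>. real (m i) / M * (1 / real (m i) * (\<Sum>j<m i. l i (snd \<omega> i) (S i j))) \<partial>Post)
              = real (m i) / M * emp_risk (l i) (m i) (S i) (Q i)"
            unfolding emp_risk_def rloss_def integral_mult_right_zero inner[OF i] ..
        qed
        finally show ?thesis .
      qed
      have \<Phi>eq: "\<Phi> = (\<lambda>x. - (M / lam) * ln (1 - x + x * e))" by (rule ext) (simp add: \<Phi>_def)
      have RfP'[measurable]: "(\<lambda>\<omega>. Rf (snd \<omega>)) \<in> borel_measurable Post" by (rule RfP)
      have iRf: "integrable Post (\<lambda>\<omega>. Rf (snd \<omega>))"
        by (rule intb[OF RfP]) (use Rfb in auto)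
      have iPhi: "integrable Post (\<lambda>\<omega>. \<Phi> (Rf (snd \<omega>)))"
      proof (rule intb)
        show "(\<lambda>\<omega>. \<Phi> (Rf (snd \<omega>))) \<in> borel_measurable Post" unfolding \<Phi>eq by measurable
        show "\<bar>\<Phi> (Rf (snd \<omega>))\<bar> \<le> 1" for \<omega> using \<Phi>b[of "Rf (snd \<omega>)"] Rfb[of "snd \<omega>"] by auto
      qed
      have iRh: "integrable Post (\<lambda>\<omega>. Rh S (snd \<omega>))"
        by (rule intb[OF RhP]) (use Rhb in auto)
      have jensen: "\<Phi> (\<integral>\<omega>. Rf (snd \<omega>) \<partial>Post) \<le> (\<integral>\<omega>. \<Phi> (Rf (snd \<omega>)) \<partial>Post)"
      proof (rule P.jensens_inequality[where I="{..< 1 / (1 - e)}" and b="1 / (1 - e)"])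
        show "integrable Post (\<lambda>\<omega>. Rf (snd \<omega>))" by (rule iRf)
        show "integrable Post (\<lambda>\<omega>. \<Phi> (Rf (snd \<omega>)))" by (rule iPhi)
        have "1 < 1 / (1 - e)" using e0 e1 by (simp add: field_simps)
        then show "AE \<omega> in Post. Rf (snd \<omega>) \<in> {..< 1 / (1 - e)}"
          using Rfb by (intro AE_I2) (auto intro: le_less_trans)
        show "convex_on {..< 1 / (1 - e)} \<Phi>"
          unfolding \<Phi>eq by (rule phi_convex) (use Mpos lam_pos e0 e1 in auto)
      qed simp
      have EG: "(\<integral>\<omega>. G \<omega> \<partial>Post) = lam * (\<integral>\<omega>. \<Phi> (Rf (snd \<omega>)) \<partial>Post) - lam * (\<integral>\<omega>. Rh S (snd \<omega>) \<partial>Post)"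
      proof -
        have "(\<integral>\<omega>. G \<omega> \<partial>Post) = (\<integral>\<omega>. lam * \<Phi> (Rf (snd \<omega>)) - lam * Rh S (snd \<omega>) \<partial>Post)"
          unfolding G_def g_def ..
        also have "\<dots> = (\<integral>\<omega>. lam * \<Phi> (Rf (snd \<omega>)) \<partial>Post) - (\<integral>\<omega>. lam * Rh S (snd \<omega>) \<partial>Post)"
          by (rule Bochner_Integration.integral_diff) (use iPhi iRh in auto)
        finally show ?thesis by simp
      qed
      have "lam * \<Phi> RS - lam * RSh \<le> K + ln (1 / delta)"
        using jensen EG dv1 lnb lam_pos unfolding ERf ERh K_def
        by (smt (verit) mult_left_mono)
      then have "\<Phi> RS \<le> RSh + (K + ln (1 / delta)) / lam"
        using lam_pos by (simp add: field_simps)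
      then show ?thesis unfolding KL Post_def[symmetric] \<Phi>_def e_def using lam_pos
        by (simp add: divide_ereal_def divide_inverse)
    qed
  qed
  show ?thesis
    unfolding SM_def[symmetric]
  proof (intro bexI[OF _ Asets] conjI Ameas ballI allI impI)
    fix S HQ and Q :: "nat \<Rightarrow> 'f measure"
    assume S: "S \<in> A" and H: "prob_space HQ \<and> sets HQ = sets (prob_algebra MF) \<and> (\<forall>i<n. Q i \<in> space (prob_algebra MF))"
    show "let M = real (\<Sum>i<n. m i); RS = \<Sum>i<n. real (m i) / M * risk (l i) (D i) (Q i);
             RSh = \<Sum>i<n. real (m i) / M * emp_risk (l i) (m i) (S i) (Q i)
         in ereal (- (M / lam) * ln (1 - RS + RS * exp (- lam / M)))
            \<le> ereal RSh + (KL_div (post_joint HQ n Q) (prior_joint MF HP n) + ereal (ln (1 / delta))) / ereal lam"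
      unfolding Let_def M_def[symmetric] N_def[symmetric]
      by (rule main[OF S]) (use H in auto)
  qed
qed

end
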